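(* Let $\lambda>0$ be fixed and let $n_1>n_2\ge j-1\ge 1$ be integers with $n_2\ge \lceil \lambda^{-1}\rceil$. Then the regular-graph exponents $\lambda_{n_1,j}(\lambda)$ and $\lambda_{n_2,j}(\lambda)$ (in dimensions $n_1$ and $n_2$, with the same parameter $\lambda$) are well-defined and satisfy $$\lambda_{n_1,j}(\lambda)<\lambda_{n_2,j}(\lambda).$$
   Context: For an integer $n\ge1$ let $f_n(x)=(1+x)^{n+1}/x$ for $x>0$. The function $f_n$ is strictly decreasing on $(0,1/n]$ and strictly increasing on $[1/n,\infty)$. Regular graph exponents (Schmidt–Summerer), defined algebraically. For $\lambda\in[1/n,\infty)$ let $\mu=\mu_n(\lambda)\in(0,1/n]$ be the unique solution of $f_n(\mu)=f_n(\lambda)$, and set $$\lambda_{n,j}(\lambda)=\lambda^{1-\frac{j-1}{n+1}}\,\mu^{\frac{j-1}{n+1}},\qquad 1\le j\le n+2 .$$ Thus $\lambda_{n,1}(\lambda)=\lambda$, $\lambda_{n,n+2}(\lambda)=\mu$, and all ratios $\lambda_{n,j}/\lambda_{n,j+1}$ are equal. For $\lambda=\infty$ put $\lambda_{n,1}=\infty$, $\lambda_{n,2}=1$ and $\lambda_{n,j}=0$ for $3\le j\le n+2$. Further put $\widehat\lambda_{n,j}(\lambda):=\lambda_{n,j+1}(\lambda)$ for $1\le j\le n+1$, and $\widehat\lambda_n(\lambda):=\widehat\lambda_{n,1}(\lambda)=\lambda_{n,2}(\lambda)$. These numbers are the simultaneous-approximation exponents $\lambda_{n,j},\widehat\lambda_{n,j}$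 of any vector inducing the regular graph in dimension $n$ with $\lambda_n=\lambda$. They are well-defined exactly when $\lambda\ge 1/n$. *)

theory Defs
  imports Complex_Main
begin

definition fn :: "nat \<Rightarrow> real \<Rightarrow> real" where
  "fn n x = (1 + x) ^ (n + 1) / x"

text \<open>mu_n(lambda): the unique mu in (0, 1/n] with f_n(mu) = f_n(lambda)
  (meaningful for lambda \<ge> 1/n).\<close>
definition mu_n :: "nat \<Rightarrow> real \<Rightarrow> real" where
  "mu_n n lam = (THE mu. 0 < mu \<and> mu \<le> 1 / real n \<and> fn n mu = fn n lam)"

definition lambda_nj :: "nat \<Rightarrow> nat \<Rightarrow> real \<Rightarrow> real" where
  "lambda_nj n j lam =
     lam powr (1 - (real j - 1) / (real n + 1)) * mu_n n lam powr ((real j - 1) / (real n + 1))"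

end

theory Submission
  imports Defs
begin

lemma fn_deriv:
  assumes "x > 0"
  shows "DERIV (fn n) x :> (1+x)^n * (real n * x - 1) / x^2"
proof -
  have d: "DERIV (\<lambda>x. (1 + x) ^ (n + 1) / x) x :>
     ((real (n+1) * (1+x)^n * 1) * x - (1+x)^(n+1) * 1) / (x * x)"
    using assms by (auto intro!: derivative_eq_intros) (cases n; simp add: algebra_simps)
  have "((real (n+1) * (1+x)^n * 1) * x - (1+x)^(n+1) * 1) / (x * x)
        = (1+x)^n * (real n * x - 1) / x^2"
    by (simp add: power2_eq_square algebra_simps)
  with d show ?thesis unfolding fn_def[abs_def] by simp
qed

lemma fn_cont: "0 < a \<Longrightarrow> continuous_on {a..b} (fn n)"
  by (rule continuous_at_imp_continuous_on)
     (meson DERIV_isCont atLeastAtMost_iff fn_deriv less_le_trans)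

lemma fn_dec:
  assumes "n \<ge> 1" "0 < x" "x < y" "y \<le> 1 / real n"
  shows "fn n y < fn n x"
proof (rule DERIV_neg_imp_decreasing_open[OF assms(3)])
  fix z assume z: "x < z" "z < y"
  have "real n * z < real n * (1 / real n)"
    using z assms by (intro mult_strict_left_mono) auto
  hence "real n * z - 1 < 0" using assms by simp
  moreover have "z > 0" using z assms by simp
  ultimately have "(1+z)^n * (real n * z - 1) / z^2 < 0"
    by (simp add: divide_neg_pos mult_pos_neg)
  thus "\<exists>d. DERIV (fn n) z :> d \<and> d < 0" using fn_deriv[OF \<open>z>0\<close>] by blast
qed (use fn_cont assms in auto)

lemma fn_inc:
  assumes "n \<ge> 1" "1 / real n \<le> x" "x \<le> y"
  shows "fn n x \<le> fn n y"
proof (rule DERIV_nonneg_imp_increasing_open[OF assms(3)])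
  have "1 / real n > 0" using assms(1) by simp
  hence xp: "x > 0" using assms(2) by linarith
  fix z assume z: "x < z" "z < y"
  have "real n * (1 / real n) \<le> real n * z"
    using z assms by (intro mult_left_mono) auto
  hence "real n * z - 1 \<ge> 0" using assms by simp
  moreover have "z > 0" using z xp by simp
  ultimately have "(1+z)^n * (real n * z - 1) / z^2 \<ge> 0"
    by simp
  thus "\<exists>d. DERIV (fn n) z :> d \<and> d \<ge> 0" using fn_deriv[OF \<open>z>0\<close>] by blast
next
  have "1 / real n > 0" using assms(1) by simp
  hence "x > 0" using assms(2) by linarith
  thus "continuous_on {x..y} (fn n)" by (rule fn_cont)
qed

lemma mu_ex1:
  assumes "n \<ge> 1" "1 / real n \<le> lam"
  shows "\<exists>!mu. 0 < mu \<and> mu \<le> 1 / real n \<and> fn n mu = fn n lam"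
proof -
  have np: "real n > 0" using assms by simp
  have "1 / real n > 0" using np by simp
  hence lp: "lam > 0" using assms(2) by linarith
  have F: "fn n lam > 0" using lp unfolding fn_def by simp
  define e where "e = min (1 / real n) (1 / fn n lam)"
  have ep: "e > 0" using np F by (simp add: e_def)
  have "1 \<le> (1 + e) ^ (n+1)" using ep by (intro one_le_power) simp
  hence "1 / e \<le> fn n e"
    unfolding fn_def using ep by (intro divide_right_mono) auto
  moreover have "fn n lam \<le> 1 / e"
  proof -
    have "e \<le> 1 / fn n lam" by (simp add: e_def)
    hence "e * fn n lam \<le> 1" using F by (simp add: field_simps)
    thus ?thesis using ep by (simp add: field_simps)
  qed
  ultimately have A: "fn n lam \<le> fn n e" by linarith
  have B: "fn n (1 / real n) \<le> fn n lam" using fn_inc[OF assms(1) _ assms(2)] by simp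
  have "e \<le> 1 / real n" by (simp add: e_def)
  from IVT2'[OF B A this fn_cont[OF ep]] obtain mu where
    mu: "e \<le> mu" "mu \<le> 1 / real n" "fn n mu = fn n lam" by blast
  show ?thesis
  proof (rule ex1I[of _ mu])
    show "0 < mu \<and> mu \<le> 1 / real n \<and> fn n mu = fn n lam" using mu ep by simp
  next
    fix m assume m: "0 < m \<and> m \<le> 1 / real n \<and> fn n m = fn n lam"
    show "m = mu"
    proof (rule ccontr)
      assume "m \<noteq> mu"
      hence "m < mu \<or> mu < m" by linarith
      thus False using fn_dec[OF assms(1)] m mu ep by (metis less_le_trans order_less_irrefl)
    qed
  qed
qed

lemma mu_props:
  assumes "n \<ge> 1" "1 / real n \<le> lam"
  shows "0 < mu_n n lam \<and> mu_n n lam \<le> 1 / real n \<and> fn n (mu_n n lam) = fn n lam"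
  unfolding mu_n_def by (rule theI'[OF mu_ex1[OF assms]])

lemma aux: "(1 - t) * a + t * b = a - t * (a - b::real)"
  by algebra

lemma lambda_ln:
  assumes "n \<ge> 1" "1 / real n \<le> lam"
  shows "ln (lambda_nj n j lam) = ln lam - (real j - 1) * (ln (1+lam) - ln (1 + mu_n n lam))"
proof -
  let ?m = "mu_n n lam"
  have np: "real n > 0" using assms by simp
  have "1 / real n > 0" using np by simp
  hence lp: "lam > 0" using assms(2) by linarith
  have M: "0 < ?m" "fn n ?m = fn n lam" using mu_props[OF assms] by auto
  have "ln (fn n ?m) = ln (fn n lam)" using M by simp
  hence E: "real (n+1) * ln (1 + ?m) - ln ?m = real (n+1) * ln (1+lam) - ln lam"
  proof -
    have a: "ln (fn n ?m) = ln ((1 + ?m) ^ (n+1)) - ln ?m"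
      unfolding fn_def using M(1) by (subst ln_div) auto
    have b: "ln (fn n lam) = ln ((1 + lam) ^ (n+1)) - ln lam"
      unfolding fn_def using lp by (subst ln_div) auto
    have c: "ln ((1 + ?m) ^ (n+1)) = real (n+1) * ln (1 + ?m)"
      using M(1) by (subst ln_realpow) auto
    have d: "ln ((1 + lam) ^ (n+1)) = real (n+1) * ln (1 + lam)"
      using lp by (subst ln_realpow) auto
    show ?thesis using a b c d \<open>ln (fn n ?m) = ln (fn n lam)\<close> by linarith
  qed
  have "ln (lambda_nj n j lam) = (1 - (real j - 1) / (real n + 1)) * ln lam
          + ((real j - 1) / (real n + 1)) * ln ?m"
    unfolding lambda_nj_def using lp M by (simp add: ln_mult ln_powr)
  also have "\<dots> = ln lam - ((real j - 1) / (real n + 1)) * (ln lam - ln ?m)"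
    using aux by blast
  also have "ln lam - ln ?m = (real n + 1) * (ln (1+lam) - ln (1 + ?m))"
    using E by (simp add: algebra_simps)
  finally show ?thesis by simp
qed

theorem proposition2p1:
  fixes lam :: real and n1 n2 j :: nat
  assumes "lam > 0"
    and "n1 > n2" and "n2 \<ge> j - 1" and "j - 1 \<ge> 1"
    and "int n2 \<ge> \<lceil>1 / lam\<rceil>"
  shows "lam \<ge> 1 / real n1 \<and> lam \<ge> 1 / real n2
     \<and> (\<exists>!mu. 0 < mu \<and> mu \<le> 1 / real n1 \<and> fn n1 mu = fn n1 lam)
     \<and> (\<exists>!mu. 0 < mu \<and> mu \<le> 1 / real n2 \<and> fn n2 mu = fn n2 lam)
     \<and> lambda_nj n1 j lam < lambda_nj n2 j lam"
proof -
  have n2: "n2 \<ge> 1" using assms by linarith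
  have n1: "n1 \<ge> 1" using assms by linarith
  have "1 / lam \<le> real n2" using assms(5)
    by (metis ceiling_le_iff of_int_of_nat_eq)
  hence L2: "1 / real n2 \<le> lam" using assms(1) n2
    by (simp add: divide_le_eq field_simps)
  have "1 / real n1 \<le> 1 / real n2" using assms(2) n2 by (simp add: frac_le)
  hence L1: "1 / real n1 \<le> lam" using L2 by linarith
  have inv: "1 / real n1 < 1 / real n2" using assms(2) n2
    by (simp add: frac_less2)
  define m1 where "m1 = mu_n n1 lam"
  define m2 where "m2 = mu_n n2 lam"
  have P1: "0 < m1" "m1 \<le> 1 / real n1" "fn n1 m1 = fn n1 lam"
    using mu_props[OF n1 L1] unfolding m1_def by auto
  have P2: "0 < m2" "m2 \<le> 1 / real n2" "fn n2 m2 = fn n2 lam"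
    using mu_props[OF n2 L2] unfolding m2_def by auto
  have mlt: "m1 < m2"
  proof (cases "m2 = lam")
    case True
    thus ?thesis using P1 inv L2 by linarith
  next
    case False
    hence m2l: "m2 < lam" using P2 L2 by linarith
    define d where "d = n1 - n2"
    have fsplit: "fn n1 x = fn n2 x * (1+x)^d" for x
      unfolding fn_def d_def using assms(2)
      by (simp add: power_add[symmetric])
    have "(1+m2)^d < (1+lam)^d" using m2l P2 assms(2)
      by (intro power_strict_mono) (auto simp: d_def)
    moreover have "fn n2 lam > 0" using assms(1) unfolding fn_def by simp
    ultimately have "fn n1 m2 < fn n1 lam"
      using fsplit[of m2] fsplit[of lam] P2(3) by simp
    hence K: "fn n1 m2 < fn n1 m1" using P1 by simp
    show ?thesis
    proof (rule ccontr)
      assume "\<not> m1 < m2"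
      hence "m2 \<le> m1" by simp
      thus False
      proof (cases "m2 = m1")
        case True thus False using K by simp
      next
        case False
        hence "m2 < m1" using \<open>m2 \<le> m1\<close> by simp
        from fn_dec[OF n1 P2(1) this P1(2)] K show False by simp
      qed
    qed
  qed
  have "ln (lambda_nj n1 j lam) < ln (lambda_nj n2 j lam)"
  proof -
    have "ln (1 + m1) < ln (1 + m2)" using mlt P1 by simp
    moreover have "real j - 1 \<ge> 1" using assms(4) by linarith
    ultimately have "(real j - 1) * (ln (1+lam) - ln (1 + m2)) < (real j - 1) * (ln (1+lam) - ln (1 + m1))"
      by (intro mult_strict_left_mono) auto
    thus ?thesis using lambda_ln[OF n1 L1, of j] lambda_ln[OF n2 L2, of j]
      unfolding m1_def m2_def by linarith
  qed
  moreover have "lambda_nj n1 j lam > 0" "lambda_nj n2 j lam > 0"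
    unfolding lambda_nj_def using P1(1) P2(1) assms(1) m1_def m2_def by auto
  ultimately have "lambda_nj n1 j lam < lambda_nj n2 j lam" by simp
  thus ?thesis using L1 L2 mu_ex1[OF n1 L1] mu_ex1[OF n2 L2] by simp
qed

end
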